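(* If $(x,y)$ and $(x,y')$ are both $\mathbf{x}$-vertices of $R$, then $d_R((x,y),(x,y'))\le d(\bar B)$.
   Context: Let $A\in\mathbb{R}^{m_1\times n_1}$, nonzero $a\in\mathbb{R}^{1\times n_1}$, nonzero $b\in\mathbb{R}^{1\times n_2}$, $B\in\mathbb{R}^{m_2\times n_2}$, $c_A\in\mathbb{R}^{m_1}$, $c_B\in\mathbb{R}^{m_2}$, $c_a,c_b\in\mathbb{R}$, and $R=\{(x,y)\in\mathbb{R}^{n_1}\times\mathbb{R}^{n_2}: Ax=c_A,\ ax+by=c_a+c_b,\ By=c_B,\ x,y\ge 0\}$. Assume $R$ is simple (nondegenerate). Let $P_A=\{x: Ax=c_A, x\ge 0\}$ and $\bar B=\begin{bmatrix}b\\ B\end{bmatrix}$. A vertex $(x,y)$ of $R$ is an $\mathbf{x}$-vertex if $x$ is a vertex of $P_A$. $d_R(v,w)$ is the minimum number of edges of an edge walk in $R$ from $v$ to $w$. For a polyhedron $P$, $d(P)$ is its combinatorial diameter (maximum distance over pairs of vertices), and for a matrix $M\in\mathbb{R}^{m\times n}$, $d(M):=\max\{d(\{z: Mz=r, z\ge 0\}): r\in\mathbb{R}^m\}$. *)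

theory Defs
  imports "HOL-Analysis.Analysis" "HOL-Library.Extended_Nat"
begin

definition poly_adjacent :: "'a::euclidean_space set \<Rightarrow> 'a \<Rightarrow> 'a \<Rightarrow> bool" where
  "poly_adjacent P v w \<longleftrightarrow> v extreme_point_of P \<and> w extreme_point_of P \<and> v \<noteq> w
      \<and> closed_segment v w face_of P"

definition edge_walk :: "'a::euclidean_space set \<Rightarrow> 'a list \<Rightarrow> bool" where
  "edge_walk P vs \<longleftrightarrow> vs \<noteq> [] \<and> (\<forall>v\<in>set vs. v extreme_point_of P)
      \<and> (\<forall>i. Suc i < length vs \<longrightarrow> poly_adjacent P (vs ! i) (vs ! Suc i))"

text \<open>d_P(v,w): minimum number of edges of an edge walk from v to w (infinity if none).\<close>
definition poly_dist :: "'a::euclidean_space set \<Rightarrow> 'a \<Rightarrow> 'a \<Rightarrow> enat" where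
  "poly_dist P v w = (INF vs \<in> {vs. edge_walk P vs \<and> hd vs = v \<and> last vs = w}.
       enat (length vs - 1))"

definition poly_diam :: "'a::euclidean_space set \<Rightarrow> enat" where
  "poly_diam P = (SUP vw \<in> {(v, w). v extreme_point_of P \<and> w extreme_point_of P}.
       poly_dist P (fst vw) (snd vw))"

definition std_poly :: "real^'n^'m \<Rightarrow> real^'m \<Rightarrow> (real^'n) set" where
  "std_poly M r = {z. M *v z = r \<and> (\<forall>i. 0 \<le> z $ i)}"

definition mat_diam :: "real^'n^'m \<Rightarrow> enat" where
  "mat_diam M = (SUP r. poly_diam (std_poly M r))"

definition simple_polyhedron :: "'a::euclidean_space set \<Rightarrow> bool" where
  "simple_polyhedron P \<longleftrightarrow> polyhedron P \<and>
     (\<forall>v. v extreme_point_of P \<longrightarrow> int (card {F. F facet_of P \<and> v \<in> F}) = aff_dim P)"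

text \<open>The matrix B-bar obtained by stacking the row b on top of B
  (row index None is b, row Some i is row i of B).\<close>
definition stack_row :: "real^'n \<Rightarrow> real^'n^'m \<Rightarrow> real^'n^('m option)" where
  "stack_row b B = (\<chi> i. case i of None \<Rightarrow> b | Some j \<Rightarrow> B $ j)"

definition R_poly :: "real^'n1^'m1 \<Rightarrow> real^'n1 \<Rightarrow> real^'n2 \<Rightarrow> real^'n2^'m2
     \<Rightarrow> real^'m1 \<Rightarrow> real^'m2 \<Rightarrow> real \<Rightarrow> real \<Rightarrow> ((real^'n1) \<times> (real^'n2)) set" where
  "R_poly A a b B cA cB ca cb = {(x, y). A *v x = cA \<and> a \<bullet> x + b \<bullet> y = ca + cb
      \<and> B *v y = cB \<and> (\<forall>i. 0 \<le> x $ i) \<and> (\<forall>j. 0 \<le> y $ j)}"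

end

theory Submission
  imports Defs
begin

lemma emb_face:
  fixes x0 :: "'a::euclidean_space" and T S :: "'b::euclidean_space set"
  shows "((\<lambda>y. (x0, y)) ` T face_of (\<lambda>y. (x0, y)) ` S) \<longleftrightarrow> T face_of S"
proof -
  let ?g = "\<lambda>y::'b. ((0::'a), y)"
  have lin: "linear ?g" by (rule linearI) auto
  have inj: "inj ?g" by (auto simp: inj_def)
  have eq: "\<And>U. (\<lambda>y. (x0, y)) ` U = (+) (x0, 0) ` (?g ` U)" by (auto simp: image_image)
  show ?thesis unfolding eq face_of_translation_eq face_of_linear_image[OF lin inj] ..
qed

lemma emb_extreme:
  fixes x0 :: "'a::euclidean_space" and S :: "'b::euclidean_space set"
  shows "((x0, v) extreme_point_of (\<lambda>y. (x0, y)) ` S) \<longleftrightarrow> v extreme_point_of S"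
  using emb_face[of x0 "{v}" S] by (simp add: face_of_singleton)

lemma emb_segment:
  fixes x0 :: "'a::euclidean_space" and v w :: "'b::euclidean_space"
  shows "closed_segment (x0, v) (x0, w) = (\<lambda>y. (x0, y)) ` closed_segment v w"
proof -
  let ?g = "\<lambda>y::'b. ((0::'a), y)"
  have lin: "linear ?g" by (rule linearI) auto
  have 1: "closed_segment ((x0,0) + ?g v) ((x0,0) + ?g w) = (+) (x0,0) ` (?g ` closed_segment v w)"
    by (metis closed_segment_linear_image[OF lin] closed_segment_translation)
  have 2: "\<And>z. (x0,0) + ?g z = (x0, z)" by simp
  have 3: "(+) (x0,0) ` (?g ` U) = (\<lambda>y. (x0, y)) ` U" for U by (auto simp: image_image)
  show ?thesis using 1 unfolding 2 3 .
qed

lemma convR: "convex (R_poly (A::real^'n1^'m1) a (b::real^'n2) B cA cB ca cb)"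
proof (unfold convex_def, intro ballI allI impI)
  fix p q :: "(real^'n1) \<times> (real^'n2)" and u v :: real
  assume p: "p \<in> R_poly A a b B cA cB ca cb" and q: "q \<in> R_poly A a b B cA cB ca cb"
    and uv: "0 \<le> u" "0 \<le> v" "u + v = 1"
  obtain x1 y1 where [simp]: "p = (x1, y1)" by (cases p)
  obtain x2 y2 where [simp]: "q = (x2, y2)" by (cases q)
  have h1: "A *v x1 = cA" "a \<bullet> x1 + b \<bullet> y1 = ca + cb" "B *v y1 = cB" "\<forall>i. 0 \<le> x1 $ i" "\<forall>j. 0 \<le> y1 $ j"
    using p by (auto simp: R_poly_def)
  have h2: "A *v x2 = cA" "a \<bullet> x2 + b \<bullet> y2 = ca + cb" "B *v y2 = cB" "\<forall>i. 0 \<le> x2 $ i" "\<forall>j. 0 \<le> y2 $ j"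
    using q by (auto simp: R_poly_def)
  have e1: "A *v (u *\<^sub>R x1 + v *\<^sub>R x2) = cA"
    using h1 h2 uv by (simp add: matrix_vector_right_distrib matrix_vector_mult_scaleR flip: scaleR_add_left)
  have e3: "B *v (u *\<^sub>R y1 + v *\<^sub>R y2) = cB"
    using h1 h2 uv by (simp add: matrix_vector_right_distrib matrix_vector_mult_scaleR flip: scaleR_add_left)
  have e2: "a \<bullet> (u *\<^sub>R x1 + v *\<^sub>R x2) + b \<bullet> (u *\<^sub>R y1 + v *\<^sub>R y2) = ca + cb"
  proof -
    have "a \<bullet> (u *\<^sub>R x1 + v *\<^sub>R x2) + b \<bullet> (u *\<^sub>R y1 + v *\<^sub>R y2)
        = u * (a \<bullet> x1 + b \<bullet> y1) + v * (a \<bullet> x2 + b \<bullet> y2)"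
      by (simp add: inner_add_right algebra_simps)
    also have "\<dots> = ca + cb" using h1 h2 uv by (simp flip: distrib_right)
    finally show ?thesis .
  qed
  have n1: "\<forall>i. 0 \<le> (u *\<^sub>R x1 + v *\<^sub>R x2) $ i" using h1 h2 uv by simp
  have n2: "\<forall>i. 0 \<le> (u *\<^sub>R y1 + v *\<^sub>R y2) $ i" using h1 h2 uv by simp
  show "u *\<^sub>R p + v *\<^sub>R q \<in> R_poly A a b B cA cB ca cb"
    using e1 e2 e3 n1 n2 by (simp add: R_poly_def)
qed

theorem lemma3:
  fixes A :: "real^'n1^'m1" and a :: "real^'n1" and b :: "real^'n2"
    and B :: "real^'n2^'m2" and cA :: "real^'m1" and cB :: "real^'m2" and ca cb :: real
    and x :: "real^'n1" and y y' :: "real^'n2"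
  assumes "a \<noteq> 0" and "b \<noteq> 0"
    and "simple_polyhedron (R_poly A a b B cA cB ca cb)"
    and "(x, y) extreme_point_of (R_poly A a b B cA cB ca cb)"
    and "(x, y') extreme_point_of (R_poly A a b B cA cB ca cb)"
    and "x extreme_point_of (std_poly A cA)"
  shows "poly_dist (R_poly A a b B cA cB ca cb) (x, y) (x, y') \<le> mat_diam (stack_row b B)"
proof -
  let ?R = "R_poly A a b B cA cB ca cb"
  define r :: "real^('m2 option)" where "r = (\<chi> i. case i of None \<Rightarrow> ca + cb - a \<bullet> x | Some j \<Rightarrow> cB $ j)"
  let ?Q = "std_poly (stack_row b B) r"
  let ?f = "\<lambda>z. (x, z)"
  have Qiff: "z \<in> ?Q \<longleftrightarrow> a \<bullet> x + b \<bullet> z = ca + cb \<and> B *v z = cB \<and> (\<forall>j. 0 \<le> z $ j)" for z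
  proof -
    have "(stack_row b B *v z = r) \<longleftrightarrow> (b \<bullet> z = ca + cb - a \<bullet> x \<and> B *v z = cB)"
    proof
      assume h: "stack_row b B *v z = r"
      have 1: "b \<bullet> z = ca + cb - a \<bullet> x"
        using arg_cong[OF h, of "\<lambda>v. v $ None"]
        by (simp add: r_def stack_row_def matrix_vector_mult_def inner_vec_def)
      have "(B *v z) $ j = cB $ j" for j
        using arg_cong[OF h, of "\<lambda>v. v $ Some j"]
        by (simp add: r_def stack_row_def matrix_vector_mult_def)
      with 1 show "b \<bullet> z = ca + cb - a \<bullet> x \<and> B *v z = cB" by (simp add: vec_eq_iff)
    next
      assume h: "b \<bullet> z = ca + cb - a \<bullet> x \<and> B *v z = cB"
      show "stack_row b B *v z = r"
      proof (subst vec_eq_iff, intro allI)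
        fix i :: "'m2 option"
        show "(stack_row b B *v z) $ i = r $ i"
        proof (cases i)
          case None then show ?thesis using h
            by (simp add: r_def stack_row_def matrix_vector_mult_def inner_vec_def)
        next
          case (Some j) then show ?thesis using h
            by (simp add: r_def stack_row_def matrix_vector_mult_def vec_eq_iff)
        qed
      qed
    qed
    then show ?thesis by (auto simp: std_poly_def)
  qed
  have xA: "A *v x = cA" "\<forall>i. 0 \<le> x $ i" using assms(6) by (auto simp: extreme_point_of_def std_poly_def)
  have Feq: "?f ` ?Q = ?R \<inter> {p. fst p = x}"
  proof (rule set_eqI)
    fix p :: "(real^'n1) \<times> (real^'n2)"
    obtain p1 p2 where pp: "p = (p1, p2)" by (cases p)
    have "p \<in> ?f ` ?Q \<longleftrightarrow> p1 = x \<and> p2 \<in> ?Q" unfolding pp by auto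
    also have "\<dots> \<longleftrightarrow> p \<in> ?R \<inter> {p. fst p = x}"
      unfolding pp Qiff R_poly_def using xA by auto
    finally show "p \<in> ?f ` ?Q \<longleftrightarrow> p \<in> ?R \<inter> {p. fst p = x}" .
  qed
  have convR: "convex ?R" by (rule convR)
  have Fface: "?f ` ?Q face_of ?R"
    unfolding Feq face_of_def
  proof (intro conjI ballI impI)
    show "?R \<inter> {p. fst p = x} \<subseteq> ?R" by blast
    show "convex (?R \<inter> {p. fst p = x})"
    proof (rule convex_Int[OF convR])
      show "convex {p::(real^'n1)\<times>(real^'n2). fst p = x}"
        unfolding convex_def by (auto simp flip: scaleR_add_left)
    qed
  next
    fix p q s
    assume q: "q \<in> ?R" and s: "s \<in> ?R" and p: "p \<in> ?R \<inter> {p. fst p = x}" and ps: "p \<in> open_segment q s"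
    have qA: "fst q \<in> std_poly A cA" using q by (auto simp: R_poly_def std_poly_def)
    have sA: "fst s \<in> std_poly A cA" using s by (auto simp: R_poly_def std_poly_def)
    obtain u where u: "0 < u" "u < 1" "p = (1 - u) *\<^sub>R q + u *\<^sub>R s"
      using ps by (auto simp: in_segment)
    have fp: "fst p = (1 - u) *\<^sub>R fst q + u *\<^sub>R fst s" using u by simp
    have "fst q = fst s"
    proof (rule ccontr)
      assume ne: "fst q \<noteq> fst s"
      have "fst p \<in> open_segment (fst q) (fst s)" using ne u fp by (auto simp: in_segment)
      then show False using assms(6) qA sA p by (auto simp: extreme_point_of_def)
    qed
    then have "fst p = fst q" using fp by (simp flip: scaleR_add_left)
    then show "q \<in> ?R \<inter> {p. fst p = x}"
      using p q s \<open>fst q = fst s\<close> by auto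
    show "s \<in> ?R \<inter> {p. fst p = x}"
      using p q s \<open>fst q = fst s\<close> \<open>fst p = fst q\<close> by auto
  qed
  have extQ: "v extreme_point_of ?Q \<longleftrightarrow> (x, v) extreme_point_of ?R \<and> (x, v) \<in> ?f ` ?Q" for v
    using extreme_point_of_face[OF Fface, of "(x, v)"] emb_extreme[of x v ?Q] by simp
  have walk: "edge_walk ?R (map ?f vs)" if "edge_walk ?Q vs" for vs
  proof -
    have vsQ: "\<forall>v\<in>set vs. v extreme_point_of ?Q" using that by (simp add: edge_walk_def)
    show ?thesis unfolding edge_walk_def
    proof (intro conjI allI impI ballI)
      show "map ?f vs \<noteq> []" using that by (simp add: edge_walk_def)
      show "v extreme_point_of ?R" if "v \<in> set (map ?f vs)" for v
        using that vsQ extQ by auto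
      fix i assume i: "Suc i < length (map ?f vs)"
      have adj: "poly_adjacent ?Q (vs ! i) (vs ! Suc i)" using that i by (simp add: edge_walk_def)
      have s1: "closed_segment (vs ! i) (vs ! Suc i) face_of ?Q" using adj by (simp add: poly_adjacent_def)
      have s2: "?f ` closed_segment (vs ! i) (vs ! Suc i) face_of ?f ` ?Q"
        using emb_face[THEN iffD2, OF s1] .
      have seg: "closed_segment (x, vs ! i) (x, vs ! Suc i) face_of ?R"
        using face_of_trans[OF s2 Fface] unfolding emb_segment .
      have e1: "(x, vs ! i) extreme_point_of ?R" "(x, vs ! Suc i) extreme_point_of ?R"
        using adj extQ unfolding poly_adjacent_def by blast+
      have ne: "vs ! i \<noteq> vs ! Suc i" using adj unfolding poly_adjacent_def by blast
      show "poly_adjacent ?R (map ?f vs ! i) (map ?f vs ! Suc i)"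
        using seg e1 ne i unfolding poly_adjacent_def by simp
    qed
  qed
  have yQ: "y extreme_point_of ?Q" "y' extreme_point_of ?Q"
    using assms(4,5) extQ Feq by (auto simp: extreme_point_of_def[of _ ?R])
  have "poly_dist ?R (x, y) (x, y') \<le> poly_dist ?Q y y'"
    unfolding poly_dist_def
  proof (rule INF_mono)
    fix vs assume "vs \<in> {vs. edge_walk ?Q vs \<and> hd vs = y \<and> last vs = y'}"
    then have h: "edge_walk ?Q vs" "hd vs = y" "last vs = y'" by auto
    then have "vs \<noteq> []" by (simp add: edge_walk_def)
    then show "\<exists>ws\<in>{vs. edge_walk ?R vs \<and> hd vs = (x, y) \<and> last vs = (x, y')}.
             enat (length ws - 1) \<le> enat (length vs - 1)"
      using h walk[OF h(1)] by (intro bexI[of _ "map ?f vs"]) (auto simp: hd_map last_map)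
  qed
  also have "\<dots> \<le> poly_diam ?Q"
    unfolding poly_diam_def using yQ by (intro SUP_upper2[of "(y, y')"]) auto
  also have "\<dots> \<le> mat_diam (stack_row b B)"
    unfolding mat_diam_def by (rule SUP_upper) simp
  finally show ?thesis .
qed

end
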